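(* Let $d\ge 3$, let $\Delta$ be a shellable simplicial $(d-1)$-sphere with facet-ridge graph $G$, let $\mathcal{O}$ be a good acyclic orientation of $G$, and let $0\le k\le d$. Then the map sending a $k$-frame $\langle t,t^1,\dots,t^k\rangle$ to the face $T\cap T^1\cap\cdots\cap T^k$ restricts to a bijection between the set of $k$-frames of $G$ whose root has indegree $k$ in the $k$-frame (i.e., all $k$ edges of the frame are directed towards the root under $\mathcal{O}$) and the set of $(d-k-1)$-dimensional faces of $\Delta$.
   Context: $\Delta$ is a simplicial complex homeomorphic to the $(d-1)$-sphere; facets have $d$ elements, ridges $d-1$. Shellable: there is an ordering $T_1,\dots,T_n$ of the facets with $\overline{T}_i\cap(\overline{T}_1\cup\cdots\cup\overline{T}_{i-1})$ pure $(d-2)$-dimensional for $i\ge2$ ($\overline{T}$ = all subsets of $T$). The facet-ridge graph $G$ has facets as vertices, adjacent iff they share a ridge; vertex $t$ corresponds to facet $T$. For $0\le k\le d$ and a face $\sigma$ with $|\sigma|=d-k$, $\mathcal{V}^\Delta_k(\sigma)$ is the set of vertices of $G$ corresponding to facets containing $\sigma$. An orientation of $G$ is good if for every such $k$ and $\sigma$ the induced orientation on $G[\mathcal{V}^\Delta_k(\sigma)]$ has exactly one sink; acyclic means no directed cycle. A $k$-frame of $G$ is a (not necessarily induced) subgraph isomorphic to $K_{1,k}$; its vertex of degree $k$ is the root; $\langle t,t^1,\dots,t^k\rangle$ denotes the $k$-frame with root $t$ and other vertices $t^1,\dots,t^k$ (a $0$-frame is a single vertex). *)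

theory Defs
  imports "HOL-Analysis.Analysis"
begin

definition simplicial_complex :: "'v::finite set set \<Rightarrow> bool" where
  "simplicial_complex \<Delta> \<longleftrightarrow> \<Delta> \<noteq> {} \<and> (\<forall>\<sigma>\<in>\<Delta>. \<forall>\<tau>. \<tau> \<subseteq> \<sigma> \<longrightarrow> \<tau> \<in> \<Delta>)"

definition geometric_realization :: "'v::finite set set \<Rightarrow> (real ^ 'v) set" where
  "geometric_realization \<Delta> = (\<Union>\<sigma>\<in>\<Delta>. convex hull ((\<lambda>v. axis v 1) ` \<sigma>))"

definition facets :: "'v set set \<Rightarrow> 'v set set" where
  "facets \<Delta> = {T \<in> \<Delta>. \<forall>T'\<in>\<Delta>. T \<subseteq> T' \<longrightarrow> T' = T}"

text \<open>A complex K is pure of dimension m-1: every face lies in a face with m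
  elements, and no face has more than m elements.\<close>
definition pure_card :: "nat \<Rightarrow> 'v set set \<Rightarrow> bool" where
  "pure_card m K \<longleftrightarrow> (\<forall>\<sigma>\<in>K. \<exists>\<tau>\<in>K. \<sigma> \<subseteq> \<tau> \<and> card \<tau> = m) \<and> (\<forall>\<tau>\<in>K. card \<tau> \<le> m)"

definition shellable :: "nat \<Rightarrow> 'v set set \<Rightarrow> bool" where
  "shellable d \<Delta> \<longleftrightarrow> (\<exists>Ts. distinct Ts \<and> set Ts = facets \<Delta> \<and>
     (\<forall>i. 1 \<le> i \<and> i < length Ts \<longrightarrow>
        pure_card (d - 1) (Pow (Ts ! i) \<inter> (\<Union>j<i. Pow (Ts ! j)))))"

text \<open>Facet-ridge graph: distinct facets sharing a ridge (a face with d-1 elements).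
  Vertices of the graph are identified with the facets themselves.\<close>
definition fr_adjacent :: "nat \<Rightarrow> 'v set set \<Rightarrow> 'v set \<Rightarrow> 'v set \<Rightarrow> bool" where
  "fr_adjacent d \<Delta> T T' \<longleftrightarrow> T \<in> facets \<Delta> \<and> T' \<in> facets \<Delta> \<and> T \<noteq> T' \<and>
     (\<exists>\<rho>. card \<rho> = d - 1 \<and> \<rho> \<subseteq> T \<and> \<rho> \<subseteq> T')"

text \<open>An orientation: a set of directed edges (a,b) meaning a \<rightarrow> b, containing exactly
  one direction of every edge of the facet-ridge graph and nothing else.\<close>
definition is_orientation :: "nat \<Rightarrow> 'v set set \<Rightarrow> ('v set \<times> 'v set) set \<Rightarrow> bool" where
  "is_orientation d \<Delta> Or \<longleftrightarrow> (\<forall>(a,b)\<in>Or. fr_adjacent d \<Delta> a b) \<and>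
     (\<forall>a b. fr_adjacent d \<Delta> a b \<longrightarrow> ((a,b) \<in> Or \<longleftrightarrow> (b,a) \<notin> Or))"

definition facets_containing :: "'v set set \<Rightarrow> 'v set \<Rightarrow> 'v set set" where
  "facets_containing \<Delta> \<sigma> = {T \<in> facets \<Delta>. \<sigma> \<subseteq> T}"

definition is_sink_in :: "('v set \<times> 'v set) set \<Rightarrow> 'v set set \<Rightarrow> 'v set \<Rightarrow> bool" where
  "is_sink_in Or W t \<longleftrightarrow> t \<in> W \<and> \<not> (\<exists>u\<in>W. (t,u) \<in> Or)"

definition good_orientation :: "nat \<Rightarrow> 'v set set \<Rightarrow> ('v set \<times> 'v set) set \<Rightarrow> bool" where
  "good_orientation d \<Delta> Or \<longleftrightarrow> is_orientation d \<Delta> Or \<and>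
     (\<forall>k\<le>d. \<forall>\<sigma>\<in>\<Delta>. card \<sigma> = d - k \<longrightarrow>
        (\<exists>!t. is_sink_in Or (facets_containing \<Delta> \<sigma>) t))"

text \<open>k-frames as rooted stars (t, S): root t and a set S of k distinct
  neighbours of t in the facet-ridge graph.\<close>
definition k_frames :: "nat \<Rightarrow> 'v set set \<Rightarrow> nat \<Rightarrow> ('v set \<times> 'v set set) set" where
  "k_frames d \<Delta> k = {(t, S). t \<in> facets \<Delta> \<and> finite S \<and> card S = k \<and>
                      (\<forall>s\<in>S. fr_adjacent d \<Delta> t s)}"

definition in_frames :: "nat \<Rightarrow> 'v set set \<Rightarrow> ('v set \<times> 'v set) set \<Rightarrow> nat \<Rightarrow> ('v set \<times> 'v set set) set" where
  "in_frames d \<Delta> Or k = {(t, S) \<in> k_frames d \<Delta> k. \<forall>s\<in>S. (s, t) \<in> Or}"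

definition frame_face :: "'v set \<times> 'v set set \<Rightarrow> 'v set" where
  "frame_face F = fst F \<inter> \<Inter> (snd F)"

end

theory Submission
  imports Defs
begin

abbreviation ax :: "'v::finite \<Rightarrow> real^'v" where "ax v \<equiv> axis v 1"

lemma conv_char:
  fixes T :: "'v::finite set"
  shows "convex hull (ax ` T) = {x. (\<forall>i. 0 \<le> x$i) \<and> (\<forall>i. i \<notin> T \<longrightarrow> x$i = 0) \<and> sum (\<lambda>i. x$i) UNIV = 1}"
    (is "?L = ?R")
proof
  show "?L \<subseteq> ?R"
  proof (rule hull_minimal)
    show "ax ` T \<subseteq> ?R"
      by (auto simp: axis_def sum.delta)
    show "convex ?R"
    proof (rule convexI)
      fix x y :: "real^'v" and u v :: real
      assume x: "x \<in> ?R" and y: "y \<in> ?R"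
        and uv: "0 \<le> u" "0 \<le> v" "u + v = 1"
      have "(\<Sum>i\<in>UNIV. u * x $ i + v * y $ i) = u * (\<Sum>i\<in>UNIV. x $ i) + v * (\<Sum>i\<in>UNIV. y $ i)"
        by (simp add: sum.distrib sum_distrib_left)
      then show "u *\<^sub>R x + v *\<^sub>R y \<in> ?R"
        using x y uv by simp
    qed
  qed
  show "?R \<subseteq> ?L"
  proof
    fix x assume x: "x \<in> ?R"
    have eq: "x = (\<Sum>i\<in>T. (x$i) *\<^sub>R ax i)"
    proof (rule vec_eq_iff[THEN iffD2], rule allI)
      fix j
      have "(\<Sum>i\<in>T. (x$i) *\<^sub>R ax i) $ j = (\<Sum>i\<in>T. (x$i) * (if j = i then 1 else 0))"
        by (simp add: axis_def)
      also have "\<dots> = x $ j" using x by (auto simp: sum.delta' if_distrib cong: if_cong)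
      finally show "x $ j = (\<Sum>i\<in>T. (x$i) *\<^sub>R ax i) $ j" by simp
    qed
    have s: "sum (\<lambda>i. x$i) T = 1"
    proof -
      have "sum (\<lambda>i. x$i) UNIV = sum (\<lambda>i. x$i) T"
        using x by (intro sum.mono_neutral_right) auto
      then show ?thesis using x by simp
    qed
    have "(\<Sum>i\<in>T. (x$i) *\<^sub>R ax i) \<in> convex hull (ax ` T)"
      by (rule convex_sum) (use x s in \<open>auto intro: hull_inc\<close>)
    with eq show "x \<in> ?L" by simp
  qed
qed

lemma hom_gf:
  assumes "homeomorphism S T f g" "W \<subseteq> S" shows "g ` f ` W = W"
proof -
  have "\<forall>x\<in>W. g (f x) = x" using assms unfolding homeomorphism_def by blast
  then have "(\<lambda>x. g (f x)) ` W = W" by simp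
  then show ?thesis by (simp add: image_comp o_def)
qed

lemma hom_fS:
  assumes "homeomorphism S T f g" "W \<subseteq> S" shows "f ` W \<subseteq> T"
  using assms unfolding homeomorphism_def by blast

lemma top1:
  fixes X :: "(real^'v::finite) set" and h :: "real^'v \<Rightarrow> real^'n::finite"
  assumes hom: "homeomorphism X (sphere (0::real^'n) 1) h g"
    and N: "openin (top_of_set X) N" and NA: "N \<subseteq> A" and A: "affine A"
    and dimA: "aff_dim A < CARD('n)"
  shows "openin (top_of_set A) N"
proof -
  have o: "openin (top_of_set (sphere (0::real^'n) 1)) (h ` N)"
    by (rule homeomorphism_imp_open_map[OF hom N])
  have NX: "N \<subseteq> X" using N by (rule openin_imp_subset)
  have gh: "g ` h ` N = N" by (rule hom_gf[OF hom NX])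
  have hN: "h ` N \<subseteq> sphere 0 1" by (rule hom_fS[OF hom NX])
  have "continuous_on (sphere 0 1) g" using hom by (simp add: homeomorphism_def)
  then have cont: "continuous_on (h ` N) g" using hN by (rule continuous_on_subset)
  have hg: "\<forall>y\<in>sphere 0 1. h (g y) = y" using hom by (simp add: homeomorphism_def)
  have inj: "inj_on g (h ` N)"
    by (rule inj_on_inverseI[where g=h]) (use hg hN in blast)
  have "openin (top_of_set A) (g ` h ` N)"
    by (rule invariance_of_domain_sphere_affine_set[OF cont inj _ _ A _ o]) (use gh NA dimA in auto)
  then show ?thesis using gh by simp
qed

lemma top2:
  fixes X :: "(real^'v::finite) set" and h :: "real^'v \<Rightarrow> real^'n::finite"
  assumes hom: "homeomorphism X (sphere (0::real^'n) 1) h g"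
    and A: "affine A" and dimA: "aff_dim A = int CARD('n) - 1"
    and U: "openin (top_of_set A) U"
    and contp: "continuous_on U \<psi>" and injp: "inj_on \<psi> U"
    and pX: "\<psi> ` U \<subseteq> X" and q: "q \<in> X" "q \<notin> \<psi> ` U"
  shows "openin (top_of_set X) (\<psi> ` U)"
proof -
  define b where "b = h q"
  have b: "b \<in> sphere (0::real^'n) 1" using hom q unfolding homeomorphism_def b_def by auto
  obtain i :: 'n where True by simp
  have ne: "(axis i 1 :: real^'n) \<noteq> 0" by (simp add: axis_eq_0_iff)
  have "(sphere (0::real^'n) 1 - {b}) homeomorphic {x::real^'n. axis i 1 \<bullet> x = 0}"
    by (rule homeomorphic_punctured_sphere_hyperplane[OF _ b ne]) simp
  then obtain f f' where ff: "homeomorphism (sphere (0::real^'n) 1 - {b}) {x::real^'n. axis i 1 \<bullet> x = 0} f f'"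
    unfolding homeomorphic_def by blast
  define V where "V = {x::real^'n. axis i 1 \<bullet> x = 0}"
  have affV: "affine V" unfolding V_def by (rule affine_hyperplane)
  have dimV: "aff_dim V = int CARD('n) - 1"
    unfolding V_def using aff_dim_hyperplane[OF ne, of 0] by simp
  have hU: "h ` \<psi> ` U \<subseteq> sphere 0 1 - {b}"
  proof
    fix y assume "y \<in> h ` \<psi> ` U"
    then obtain x where x: "x \<in> \<psi> ` U" "y = h x" by blast
    have "x \<in> X" using x pX by auto
    moreover have "h x \<noteq> h q"
    proof
      assume "h x = h q"
      then have "g (h x) = g (h q)" by simp
      then have "x = q" using hom \<open>x \<in> X\<close> q unfolding homeomorphism_def by auto
      then show False using x q by auto
    qed
    ultimately show "y \<in> sphere 0 1 - {b}"
      using hom x unfolding homeomorphism_def b_def by auto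
  qed
  have contF: "continuous_on U (f \<circ> h \<circ> \<psi>)"
  proof (intro continuous_on_compose contp)
    show "continuous_on (\<psi> ` U) h"
      using hom pX unfolding homeomorphism_def by (meson continuous_on_subset)
    show "continuous_on (h ` \<psi> ` U) f"
      using ff hU unfolding homeomorphism_def by (meson continuous_on_subset)
  qed
  have FV: "(f \<circ> h \<circ> \<psi>) \<in> U \<rightarrow> V"
    using ff hU unfolding homeomorphism_def V_def by force
  have injF: "inj_on (f \<circ> h \<circ> \<psi>) U"
  proof (rule inj_onI)
    fix x y assume xy: "x \<in> U" "y \<in> U" "(f \<circ> h \<circ> \<psi>) x = (f \<circ> h \<circ> \<psi>) y"
    have "h (\<psi> x) \<in> sphere 0 1 - {b}" "h (\<psi> y) \<in> sphere 0 1 - {b}"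
      using subsetD[OF hU, OF imageI[OF imageI[OF xy(1)]]] subsetD[OF hU, OF imageI[OF imageI[OF xy(2)]]]
      by (simp_all del: mem_sphere)
    then have "h (\<psi> x) = h (\<psi> y)" using ff xy unfolding homeomorphism_def by (metis comp_apply)
    then have "\<psi> x = \<psi> y" using hom pX xy unfolding homeomorphism_def by (metis image_subset_iff)
    then show "x = y" using injp xy by (meson inj_onD)
  qed
  have o1: "openin (top_of_set V) ((f \<circ> h \<circ> \<psi>) ` U)"
    by (rule invariance_of_domain_affine_sets[OF U A affV _ contF FV injF]) (simp add: dimA dimV)
  have eq1: "f' ` (f \<circ> h \<circ> \<psi>) ` U = h ` \<psi> ` U"
    using hom_gf[OF ff hU] by (simp add: image_comp)
  have o2: "openin (top_of_set (sphere 0 1 - {b})) (h ` \<psi> ` U)"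
    using homeomorphism_imp_open_map[OF homeomorphism_symD[OF ff] o1[unfolded V_def]] eq1 by simp
  have o3: "openin (top_of_set (sphere (0::real^'n) 1)) (h ` \<psi> ` U)"
    by (rule openin_trans[OF o2]) (simp add: openin_delete)
  have eq2: "g ` h ` \<psi> ` U = \<psi> ` U" by (rule hom_gf[OF hom pX])
  show ?thesis
    using homeomorphism_imp_open_map[OF homeomorphism_symD[OF hom] o3] eq2 by simp
qed


lemma face_in_facet:
  fixes \<Delta> :: "'v::finite set set"
  assumes "\<sigma> \<in> \<Delta>" shows "\<exists>T\<in>facets \<Delta>. \<sigma> \<subseteq> T"
proof -
  have fin: "finite {\<tau>\<in>\<Delta>. \<sigma> \<subseteq> \<tau>}" by simp
  have ne: "{\<tau>\<in>\<Delta>. \<sigma> \<subseteq> \<tau>} \<noteq> {}" using assms by blast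
  from finite_has_maximal[OF fin ne] obtain m where m: "m \<in> {\<tau>\<in>\<Delta>. \<sigma> \<subseteq> \<tau>}"
    and mx: "\<forall>b\<in>{\<tau>\<in>\<Delta>. \<sigma> \<subseteq> \<tau>}. m \<le> b \<longrightarrow> m = b"
    by (elim bexE)
  have "m \<in> facets \<Delta>" unfolding facets_def
  proof (intro CollectI conjI ballI impI)
    show "m \<in> \<Delta>" using m by simp
    fix T' assume "T' \<in> \<Delta>" "m \<subseteq> T'"
    then show "T' = m" using mx m by auto
  qed
  then show ?thesis using m by blast
qed

lemma facet_extra:
  fixes \<rho> T :: "'v::finite set"
  assumes "card T = d" "\<rho> \<subseteq> T" "card \<rho> = d - 1" "d \<ge> 1"
  obtains a where "a \<notin> \<rho>" "T = insert a \<rho>"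
proof -
  have "card (T - \<rho>) = 1" using assms by (simp add: card_Diff_subset)
  then obtain a where "T - \<rho> = {a}" by (rule card_1_singletonE)
  then have "a \<notin> \<rho>" "T = insert a \<rho>" using assms by auto
  then show ?thesis using that by blast
qed

lemma conv_sub_X:
  "\<sigma> \<in> \<Delta> \<Longrightarrow> convex hull (ax ` \<sigma>) \<subseteq> geometric_realization \<Delta>"
  unfolding geometric_realization_def by blast

lemma vsum_axis: "(\<Sum>i\<in>UNIV. (ax a :: real^'v::finite) $ i) = 1"
  by (simp add: axis_def)

lemma comp_le_dist: "\<bar>x $ i - y $ i\<bar> \<le> dist x (y :: real^'v::finite)"
  by (metis component_le_norm_cart dist_norm vector_minus_component)

lemma aff_dim_simplex:
  fixes T :: "'v::finite set"
  shows "aff_dim (affine hull (ax ` T)) = int (card T) - 1"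
proof -
  have "ax ` T \<subseteq> Basis" by (auto simp: axis_in_Basis_iff)
  then have "independent (ax ` T)" using independent_Basis independent_mono by blast
  then have nd: "\<not> affine_dependent (ax ` T)" using affine_dependent_imp_dependent by blast
  have "card (ax ` T) = card T"
    by (rule card_image) (auto simp: inj_on_def axis_eq_axis)
  then show ?thesis using aff_dim_affine_independent[OF nd] by simp
qed

lemma affine_hull_sub:
  fixes T :: "'v::finite set"
  shows "affine hull (ax ` T) \<subseteq> {y. (\<forall>i. i \<notin> T \<longrightarrow> y$i = 0) \<and> (\<Sum>i\<in>UNIV. y$i) = 1}"
proof (rule hull_minimal)
  show "ax ` T \<subseteq> {y. (\<forall>i. i \<notin> T \<longrightarrow> y$i = 0) \<and> (\<Sum>i\<in>UNIV. y$i) = 1}"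
    by (auto simp: axis_def)
  show "affine {y. (\<forall>i. i \<notin> T \<longrightarrow> y$i = 0) \<and> (\<Sum>i\<in>UNIV. y$i) = 1}"
    unfolding affine_def apply (auto simp: sum.distrib scaleR_sum_right[symmetric])
    by (metis scaleR_add_left scaleR_one)
qed

lemma bary:
  fixes \<rho> :: "'v::finite set"
  assumes "\<rho> \<subseteq> T" "\<rho> \<noteq> {}"
  shows "(\<chi> i. if i \<in> \<rho> then 1 / real (card \<rho>) else 0) \<in> convex hull (ax ` T)"
proof -
  have "(\<Sum>i\<in>UNIV. (if i \<in> \<rho> then 1 / real (card \<rho>) else 0)) = 1"
    using assms by (simp add: sum.If_cases)
  then show ?thesis using assms unfolding conv_char by auto
qed


lemma local_facets:
  fixes \<Delta> :: "'v::finite set set"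
  assumes x: "x \<in> geometric_realization \<Delta>"
    and p: "p = (\<chi> i. if i \<in> \<rho> then c0 else 0)" and dist: "dist p x < c0"
  shows "\<exists>T'\<in>facets \<Delta>. \<rho> \<subseteq> T' \<and> x \<in> convex hull (ax ` T')"
proof -
  obtain \<sigma> where \<sigma>: "\<sigma> \<in> \<Delta>" "x \<in> convex hull (ax ` \<sigma>)"
    using x unfolding geometric_realization_def by blast
  show ?thesis
  proof (cases "\<rho> \<subseteq> \<sigma>")
    case True
    obtain T' where "T' \<in> facets \<Delta>" "\<sigma> \<subseteq> T'" using face_in_facet[OF \<sigma>(1)] by blast
    moreover have "convex hull (ax ` \<sigma>) \<subseteq> convex hull (ax ` T')"
      by (rule hull_mono, rule image_mono) fact
    ultimately show ?thesis using True \<sigma> by blast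
  next
    case False
    then obtain u where u: "u \<in> \<rho>" "u \<notin> \<sigma>" by blast
    have "x $ u = 0" using \<sigma>(2) u unfolding conv_char by auto
    moreover have "p $ u = c0" using u p by simp
    moreover have "\<bar>p $ u - x $ u\<bar> \<le> dist p x" by (rule comp_le_dist)
    ultimately have False using dist by simp
    then show ?thesis ..
  qed
qed

lemma ridge_exists:
  fixes \<Delta> :: "'v::finite set set" and h :: "real^'v \<Rightarrow> real^'n::finite"
  assumes hom: "homeomorphism (geometric_realization \<Delta>) (sphere (0::real^'n) 1) h g"
    and cardn: "CARD('n) = d" and d: "d \<ge> 3"
    and fc: "\<forall>T\<in>facets \<Delta>. card T = d"
    and T: "T \<in> facets \<Delta>" and \<rho>T: "\<rho> \<subseteq> T" and c\<rho>: "card \<rho> = d - 1"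
  shows "\<exists>T'\<in>facets \<Delta>. T' \<noteq> T \<and> \<rho> \<subseteq> T'"
proof (rule ccontr)
  assume "\<not> ?thesis"
  then have only: "\<forall>T'\<in>facets \<Delta>. \<rho> \<subseteq> T' \<longrightarrow> T' = T" by blast
  obtain a where a: "a \<notin> \<rho>" "T = insert a \<rho>"
    using facet_extra[of T d \<rho>] fc T \<rho>T c\<rho> d by auto
  define X where "X = geometric_realization \<Delta>"
  define c0 :: real where "c0 = 1 / real (card \<rho>)"
  define p :: "real^'v" where "p = (\<chi> i. if i \<in> \<rho> then c0 else 0)"
  have \<rho>ne: "\<rho> \<noteq> {}" using c\<rho> d by auto
  have c0pos: "c0 > 0" using \<rho>ne unfolding c0_def by (simp add: card_gt_0_iff)
  define A where "A = affine hull (ax ` T)"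
  have T\<Delta>: "T \<in> \<Delta>" using T unfolding facets_def by auto
  have pT: "p \<in> convex hull (ax ` T)" unfolding p_def c0_def using bary[OF \<rho>T \<rho>ne] .
  have convA: "convex hull (ax ` T) \<subseteq> A" unfolding A_def by (rule convex_hull_subset_affine_hull)
  define N where "N = X \<inter> ball p c0"
  have oN: "openin (top_of_set X) N" unfolding N_def by (rule openin_open_Int) simp
  have NT: "N \<subseteq> convex hull (ax ` T)"
  proof
    fix x assume "x \<in> N"
    then have "x \<in> geometric_realization \<Delta>" "dist p x < c0" unfolding N_def X_def by auto
    then obtain T' where "T' \<in> facets \<Delta>" "\<rho> \<subseteq> T'" "x \<in> convex hull (ax ` T')"
      using local_facets[OF _ p_def] by blast
    then show "x \<in> convex hull (ax ` T)" using only by auto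
  qed
  have dimA: "aff_dim A = int d - 1" unfolding A_def using aff_dim_simplex[of T] fc T by simp
  have oA: "openin (top_of_set A) N"
    by (rule top1[OF hom[folded X_def] oN]) (use NT convA dimA cardn A_def affine_affine_hull in auto)
  have pN: "p \<in> N" unfolding N_def using conv_sub_X[OF T\<Delta>] pT c0pos X_def by auto
  obtain \<epsilon> where \<epsilon>: "\<epsilon> > 0" "ball p \<epsilon> \<inter> A \<subseteq> N" using oA pN unfolding openin_contains_ball by blast
  define nrm where "nrm = norm (ax a - p)"
  define \<delta> where "\<delta> = \<epsilon> / (2 * (nrm + 1))"
  have nrm0: "nrm \<ge> 0" unfolding nrm_def by simp
  have \<delta>pos: "\<delta> > 0" using \<epsilon> nrm0 unfolding \<delta>_def by simp
  have "\<delta> * nrm \<le> \<delta> * (nrm + 1)" using \<delta>pos by simp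
  also have "\<delta> * (nrm + 1) = \<epsilon> / 2" unfolding \<delta>_def using nrm0 by (simp add: field_simps)
  finally have \<delta>n: "\<delta> * nrm < \<epsilon>" using \<epsilon> by simp
  define z where "z = (1 + \<delta>) *\<^sub>R p + (-\<delta>) *\<^sub>R ax a"
  have aA: "ax a \<in> A" unfolding A_def using a by (intro hull_inc) auto
  have zA: "z \<in> A" unfolding z_def A_def
    by (rule mem_affine[OF affine_affine_hull]) (use pT convA aA A_def in auto)
  have "p - z = \<delta> *\<^sub>R (ax a - p)" by (simp add: z_def algebra_simps)
  then have "dist p z = \<delta> * nrm" unfolding nrm_def dist_norm using \<delta>pos by simp
  then have "z \<in> ball p \<epsilon>" using \<delta>n by simp
  then have "z \<in> convex hull (ax ` T)" using zA \<epsilon> NT by blast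
  then have "z $ a \<ge> 0" unfolding conv_char by auto
  moreover have "z $ a = - \<delta>" using a unfolding z_def p_def by (simp add: axis_def)
  ultimately show False using \<delta>pos by simp
qed


lemma ridge_unique:
  fixes \<Delta> :: "'v::finite set set" and h :: "real^'v \<Rightarrow> real^'n::finite"
  assumes hom: "homeomorphism (geometric_realization \<Delta>) (sphere (0::real^'n) 1) h g"
    and cardn: "CARD('n) = d" and d: "d \<ge> 3"
    and fc: "\<forall>T\<in>facets \<Delta>. card T = d"
    and T1: "T1 \<in> facets \<Delta>" and T2: "T2 \<in> facets \<Delta>" and T3: "T3 \<in> facets \<Delta>"
    and dist12: "T1 \<noteq> T2" and dist13: "T1 \<noteq> T3" and dist23: "T2 \<noteq> T3"
    and \<rho>1: "\<rho> \<subseteq> T1" and \<rho>2: "\<rho> \<subseteq> T2" and \<rho>3: "\<rho> \<subseteq> T3" and c\<rho>: "card \<rho> = d - 1"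
  shows False
proof -
  obtain a where a: "a \<notin> \<rho>" "T1 = insert a \<rho>"
    using facet_extra[of T1 d \<rho>] fc T1 \<rho>1 c\<rho> d by auto
  obtain b where b: "b \<notin> \<rho>" "T2 = insert b \<rho>"
    using facet_extra[of T2 d \<rho>] fc T2 \<rho>2 c\<rho> d by auto
  obtain c where c: "c \<notin> \<rho>" "T3 = insert c \<rho>"
    using facet_extra[of T3 d \<rho>] fc T3 \<rho>3 c\<rho> d by auto
  have ab: "a \<noteq> b" using a b dist12 by auto
  have ac: "a \<noteq> c" using a c dist13 by auto
  have bc: "b \<noteq> c" using b c dist23 by auto
  define X where "X = geometric_realization \<Delta>"
  define c0 :: real where "c0 = 1 / real (card \<rho>)"
  define p :: "real^'v" where "p = (\<chi> i. if i \<in> \<rho> then c0 else 0)"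
  have \<rho>ne: "\<rho> \<noteq> {}" using c\<rho> d by auto
  have c0pos: "c0 > 0" using \<rho>ne unfolding c0_def by (simp add: card_gt_0_iff)
  have c0half: "2 * c0 \<le> 1" using c\<rho> d unfolding c0_def by (simp add: field_simps)
  have pi: "\<And>i. p $ i = (if i \<in> \<rho> then c0 else 0)" unfolding p_def by simp
  have psum: "(\<Sum>i\<in>UNIV. p $ i) = 1"
    using \<rho>ne unfolding p_def c0_def by (simp add: sum.If_cases)
  have T1\<Delta>: "T1 \<in> \<Delta>" "T2 \<in> \<Delta>" "T3 \<in> \<Delta>" using T1 T2 T3 unfolding facets_def by auto
  have pT: "p \<in> convex hull (ax ` T1)" "p \<in> convex hull (ax ` T3)"
    unfolding p_def c0_def using bary[OF \<rho>1 \<rho>ne] bary[OF \<rho>3 \<rho>ne] by auto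
  define A where "A = affine hull (ax ` T1)"
  have convA: "convex hull (ax ` T1) \<subseteq> A" unfolding A_def by (rule convex_hull_subset_affine_hull)
  have Aprop: "\<And>y. y \<in> A \<Longrightarrow> (\<forall>i. i \<notin> T1 \<longrightarrow> y$i = 0) \<and> (\<Sum>i\<in>UNIV. y$i) = 1"
    using affine_hull_sub[of T1] unfolding A_def by blast
  define w :: "real^'v" where "w = 2 *\<^sub>R p - ax a - ax b"
  have wi: "\<And>i. w $ i = 2 * (if i \<in> \<rho> then c0 else 0) - (if i = a then 1 else 0) - (if i = b then 1 else 0)"
    unfolding w_def p_def by (simp add: axis_def)
  have wsum: "(\<Sum>i\<in>UNIV. w $ i) = 0"
  proof -
    have "(\<Sum>i\<in>UNIV. w $ i) = 2 * (\<Sum>i\<in>UNIV. p $ i) - (\<Sum>i\<in>UNIV. ax a $ i) - (\<Sum>i\<in>UNIV. ax b $ i)"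
      unfolding w_def by (simp add: sum_subtractf sum_distrib_left)
    then show ?thesis using psum vsum_axis[of a] vsum_axis[of b] by simp
  qed
  define \<psi> where "\<psi> = (\<lambda>y::real^'v. y + min (y$a) 0 *\<^sub>R w)"
  have psii: "\<And>y i. \<psi> y $ i = y $ i + min (y$a) 0 * w $ i" unfolding \<psi>_def by simp
  define \<eta> where "\<eta> = c0 / 4"
  have \<eta>pos: "\<eta> > 0" using c0pos unfolding \<eta>_def by simp
  define U where "U = A \<inter> ball p \<eta>"
  have oU: "openin (top_of_set A) U" unfolding U_def by (rule openin_open_Int) simp
  have key: "\<psi> y \<in> convex hull (ax ` T1) \<union> convex hull (ax ` T2)" if yU: "y \<in> U" for y
  proof -
    have yA: "\<forall>i. i \<notin> T1 \<longrightarrow> y$i = 0" "(\<Sum>i\<in>UNIV. y$i) = 1" using yU Aprop unfolding U_def by auto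
    have close: "\<bar>p $ i - y $ i\<bar> < \<eta>" for i
      using comp_le_dist[of p i y] yU unfolding U_def by auto
    have yrho: "y $ i > c0 - \<eta>" if "i \<in> \<rho>" for i using close[of i] pi[of i] that by auto
    have ya: "y $ a > - \<eta>" using close[of a] pi[of a] a by auto
    show ?thesis
    proof (cases "y $ a \<ge> 0")
      case True
      then have "\<psi> y = y" unfolding \<psi>_def by simp
      moreover have "y \<in> convex hull (ax ` T1)"
        unfolding conv_char
      proof (intro CollectI conjI allI impI)
        fix i show "0 \<le> y $ i"
        proof (cases "i \<in> T1")
          case True
          then show ?thesis using yrho[of i] \<open>y $ a \<ge> 0\<close> a c0pos unfolding \<eta>_def by auto
        next
          case False then show ?thesis using yA by simp
        qed
      qed (use yA in auto)
      ultimately show ?thesis by simp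
    next
      case False
      define m where "m = y $ a"
      have m: "m < 0" "m > - \<eta>" using False ya unfolding m_def by auto
      have mn: "min (y$a) 0 = m" using m unfolding m_def by simp
      have "m * (2 * c0) \<ge> - \<eta> * (2 * c0)" using m c0pos by (intro mult_right_mono) auto
      moreover have "\<eta> * (2 * c0) \<le> \<eta> * 1" using \<eta>pos c0half by (intro mult_left_mono) auto
      ultimately have m2: "m * (2 * c0) \<ge> - \<eta>" by linarith
      have yb: "y $ b = 0" using yA a b ab by auto
      have coord: "\<psi> y $ i = (if i \<in> \<rho> then y $ i + m * (2 * c0) else if i = b then - m else 0)" for i
      proof -
        have e: "\<psi> y $ i = y $ i + m * w $ i" using psii mn by simp
        show ?thesis
        proof (cases "i \<in> \<rho>")
          case True
          then have "i \<noteq> a" "i \<noteq> b" using a b by auto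
          then have "w $ i = 2 * c0" using wi[of i] True by simp
          then show ?thesis using e True by simp
        next
          case F1: False
          show ?thesis
          proof (cases "i = b")
            case True
            then have "w $ i = -1" using wi[of i] F1 ab by simp
            then show ?thesis using e True F1 yb by simp
          next
            case F2: False
            show ?thesis
            proof (cases "i = a")
              case True
              then have "w $ i = -1" using wi[of i] F1 ab by simp
              then show ?thesis using e True F1 F2 unfolding m_def by simp
            next
              case F3: False
              then have "w $ i = 0" using wi[of i] F1 F2 by simp
              moreover have "y $ i = 0" using yA(1) F1 F3 a by auto
              ultimately show ?thesis using e F1 F2 by simp
            qed
          qed
        qed
      qed
      have "\<psi> y \<in> convex hull (ax ` T2)"
        unfolding conv_char
      proof (intro CollectI conjI allI impI)
        fix i show "0 \<le> \<psi> y $ i"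
        proof (cases "i \<in> \<rho>")
          case True
          then show ?thesis using coord[of i] yrho[of i] m2 c0pos unfolding \<eta>_def by auto
        next
          case False then show ?thesis using coord[of i] m by auto
        qed
      next
        fix i assume "i \<notin> T2" then show "\<psi> y $ i = 0" using coord[of i] b by auto
      next
        have "(\<Sum>i\<in>UNIV. \<psi> y $ i) = (\<Sum>i\<in>UNIV. y $ i) + min (y$a) 0 * (\<Sum>i\<in>UNIV. w $ i)"
          unfolding psii by (simp add: sum.distrib sum_distrib_left)
        then show "(\<Sum>i\<in>UNIV. \<psi> y $ i) = 1" using yA wsum by simp
      qed
      then show ?thesis by simp
    qed
  qed
  have contp: "continuous_on U \<psi>" unfolding \<psi>_def by (intro continuous_intros)
  have injp: "inj_on \<psi> U"
  proof (rule inj_onI)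
    fix y y' assume y: "y \<in> U" and y': "y' \<in> U" and eq: "\<psi> y = \<psi> y'"
    have yb: "y $ b = 0" "y' $ b = 0" using y y' Aprop a b ab unfolding U_def by auto
    have wa: "w $ a = -1" "w $ b = -1" using wi[of a] wi[of b] a b ab by auto
    have e1: "\<psi> y $ a = \<psi> y' $ a" "\<psi> y $ b = \<psi> y' $ b" using eq by auto
    then have "min (y$a) 0 = min (y'$a) 0" using psii wa yb by simp
    moreover have "y $ a - min (y$a) 0 = y' $ a - min (y'$a) 0" using e1 psii wa by simp
    ultimately have "min (y$a) 0 = min (y'$a) 0" "y $ a = y' $ a" by auto
    then show "y = y'" using eq unfolding \<psi>_def by simp
  qed
  have conv12X: "convex hull (ax ` T1) \<union> convex hull (ax ` T2) \<subseteq> X"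
    using conv_sub_X[OF T1\<Delta>(1)] conv_sub_X[OF T1\<Delta>(2)] X_def by auto
  have pX: "\<psi> ` U \<subseteq> X" using key conv12X by blast
  have cn: "c \<notin> T1" "c \<notin> T2" using a b c ac bc by auto
  have c0out: "z $ c = 0" if "z \<in> convex hull (ax ` T1) \<union> convex hull (ax ` T2)" for z
  proof -
    have "(\<forall>i. i \<notin> T1 \<longrightarrow> z$i = 0) \<or> (\<forall>i. i \<notin> T2 \<longrightarrow> z$i = 0)"
      using that unfolding conv_char by blast
    then show ?thesis using cn by blast
  qed
  have cT3: "ax c \<in> convex hull (ax ` T3)" using c by (intro hull_inc) auto
  have qX: "ax c \<in> X"
    using conv_sub_X[OF T1\<Delta>(3)] cT3 unfolding X_def by (rule subsetD)
  have qn: "ax c \<notin> \<psi> ` U"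
  proof
    assume "ax c \<in> \<psi> ` U"
    then obtain y where y: "y \<in> U" "ax c = \<psi> y" by blast
    have "ax c $ c = (0::real)" using c0out[OF key[OF y(1)]] y(2) by simp
    then show False by simp
  qed
  have dimA: "aff_dim A = int CARD('n) - 1" unfolding A_def using aff_dim_simplex[of T1] fc T1 cardn by simp
  have oX: "openin (top_of_set X) (\<psi> ` U)"
    by (rule top2[OF hom[folded X_def] affine_affine_hull[of "ax ` T1", folded A_def] dimA oU contp injp pX qX qn])
  have pU: "p \<in> U" unfolding U_def using pT convA \<eta>pos by auto
  have "\<psi> p = p" unfolding \<psi>_def using pi[of a] a by simp
  then have ppU: "p \<in> \<psi> ` U" using pU by force
  obtain \<epsilon> where \<epsilon>: "\<epsilon> > 0" "ball p \<epsilon> \<inter> X \<subseteq> \<psi> ` U" using oX ppU unfolding openin_contains_ball by blast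
  define nrm where "nrm = norm (ax c - p)"
  have nrm0: "nrm \<ge> 0" unfolding nrm_def by simp
  define \<delta> where "\<delta> = min (1/2) (\<epsilon> / (2 * (nrm + 1)))"
  have \<delta>pos: "\<delta> > 0" using \<epsilon> nrm0 unfolding \<delta>_def by simp
  have \<delta>le: "\<delta> \<le> 1" unfolding \<delta>_def by simp
  have "\<delta> * nrm \<le> \<delta> * (nrm + 1)" using \<delta>pos by simp
  also have "\<delta> * (nrm + 1) \<le> (\<epsilon> / (2 * (nrm + 1))) * (nrm + 1)"
    using nrm0 unfolding \<delta>_def by (intro mult_right_mono) auto
  also have "(\<epsilon> / (2 * (nrm + 1))) * (nrm + 1) = \<epsilon> / 2" using nrm0 by (simp add: field_simps)
  finally have \<delta>n: "\<delta> * nrm < \<epsilon>" using \<epsilon> by simp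
  define z where "z = (1 - \<delta>) *\<^sub>R p + \<delta> *\<^sub>R ax c"
  have zT3: "z \<in> convex hull (ax ` T3)" unfolding z_def
    by (rule convexD[OF convex_convex_hull pT(2) cT3]) (use \<delta>pos \<delta>le in auto)
  have zX: "z \<in> X" using zT3 conv_sub_X[OF T1\<Delta>(3)] X_def by auto
  have "p - z = \<delta> *\<^sub>R (p - ax c)" by (simp add: z_def algebra_simps)
  then have "dist p z = \<delta> * nrm" unfolding nrm_def dist_norm using \<delta>pos by (simp add: norm_minus_commute)
  then have "z \<in> ball p \<epsilon>" using \<delta>n by simp
  then have "z \<in> \<psi> ` U" using zX \<epsilon> by blast
  then obtain y where y: "y \<in> U" "z = \<psi> y" by blast
  have "z $ c = 0" using c0out[OF key[OF y(1)]] y(2) by simp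
  moreover have "z $ c = \<delta>" using c unfolding z_def p_def by (simp add: axis_def)
  ultimately show False using \<delta>pos by simp
qed


theorem proposition4p1:
  fixes \<Delta> :: "'v::finite set set"
    and Or :: "('v set \<times> 'v set) set"
    and d k :: nat
  assumes "d \<ge> 3"
    and "simplicial_complex \<Delta>"
    and "CARD('n::finite) = d"
    and "geometric_realization \<Delta> homeomorphic sphere (0 :: real ^ 'n) 1"
    and "\<forall>T\<in>facets \<Delta>. card T = d"
    and "shellable d \<Delta>"
    and "good_orientation d \<Delta> Or"
    and "acyclic Or"
    and "k \<le> d"
  shows "bij_betw frame_face (in_frames d \<Delta> Or k) {\<sigma> \<in> \<Delta>. card \<sigma> = d - k}"
proof -
  note d = assms(1) and sc = assms(2) and cardn = assms(3) and fc = assms(5)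
    and good = assms(7) and kd = assms(9)
  obtain h g where hom: "homeomorphism (geometric_realization \<Delta>) (sphere (0::real^'n) 1) h g"
    using assms(4) unfolding homeomorphic_def by blast
  define F where "F = facets \<Delta>"
  have F\<Delta>: "F \<subseteq> \<Delta>" unfolding F_def facets_def by auto
  have down: "\<And>\<sigma> \<tau>. \<sigma> \<in> \<Delta> \<Longrightarrow> \<tau> \<subseteq> \<sigma> \<Longrightarrow> \<tau> \<in> \<Delta>"
    using sc unfolding simplicial_complex_def by blast
  have cr: "card (T - {v}) = d - 1" if "T \<in> F" "v \<in> T" for T v
    using that fc unfolding F_def by (simp add: card_Diff_singleton)
  have nb_ex: "\<exists>T'\<in>F. T' \<noteq> T \<and> T - {v} \<subseteq> T'" if "T \<in> F" "v \<in> T" for T v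
    using ridge_exists[OF hom cardn d fc, of T "T - {v}"] that cr unfolding F_def by auto
  have nb_un: "T1 = T2" if "T \<in> F" "v \<in> T" "T1 \<in> F" "T1 \<noteq> T" "T - {v} \<subseteq> T1"
      "T2 \<in> F" "T2 \<noteq> T" "T - {v} \<subseteq> T2" for T v T1 T2
  proof (rule ccontr)
    assume "T1 \<noteq> T2"
    then show False
      using ridge_unique[OF hom cardn d fc, of T T1 T2 "T - {v}"] that cr unfolding F_def by auto
  qed
  define nb where "nb T v = (THE T'. T' \<in> F \<and> T' \<noteq> T \<and> T - {v} \<subseteq> T')" for T v
  have nbP: "nb T v \<in> F \<and> nb T v \<noteq> T \<and> T - {v} \<subseteq> nb T v" if "T \<in> F" "v \<in> T" for T v
  proof -
    have "\<exists>!T'. T' \<in> F \<and> T' \<noteq> T \<and> T - {v} \<subseteq> T'"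
      using nb_ex[OF that] nb_un[OF that] by blast
    then show ?thesis unfolding nb_def by (rule theI')
  qed
  have nb_char: "T' = nb T v" if "T \<in> F" "v \<in> T" "T' \<in> F" "T' \<noteq> T" "T - {v} \<subseteq> T'" for T v T'
    using nb_un[OF that(1,2,3,4,5)] nbP[OF that(1,2)] by blast
  have nb_notin: "v \<notin> nb T v" if "T \<in> F" "v \<in> T" for T v
  proof
    assume "v \<in> nb T v"
    then have "T \<subseteq> nb T v" using nbP[OF that] by auto
    moreover have "card T = card (nb T v)" using nbP[OF that] that fc unfolding F_def by auto
    ultimately have "T = nb T v" by (simp add: card_subset_eq)
    then show False using nbP[OF that] by auto
  qed
  have nb_adj: "fr_adjacent d \<Delta> T (nb T v)" if "T \<in> F" "v \<in> T" for T v
    unfolding fr_adjacent_def using nbP[OF that] cr[OF that] that unfolding F_def by blast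
  have adj_nb: "\<exists>v\<in>T. s = nb T v" if adjTs: "fr_adjacent d \<Delta> T s" for T s
  proof -
    obtain \<rho> where \<rho>: "card \<rho> = d - 1" "\<rho> \<subseteq> T" "\<rho> \<subseteq> s" and TF: "T \<in> F" "s \<in> F" "T \<noteq> s"
      using adjTs unfolding fr_adjacent_def F_def by blast
    obtain v where v: "v \<notin> \<rho>" "T = insert v \<rho>"
      using facet_extra[of T d \<rho>] fc TF \<rho> d unfolding F_def by auto
    have "T - {v} \<subseteq> s" using v \<rho> by auto
    then have "s = nb T v" using nb_char[of T v s] TF v by auto
    then show ?thesis using v by auto
  qed
  have nb_inj: "inj_on (nb T) T" if "T \<in> F" for T
  proof (rule inj_onI)
    fix v v' assume vv: "v \<in> T" "v' \<in> T" "nb T v = nb T v'"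
    show "v = v'"
    proof (rule ccontr)
      assume "v \<noteq> v'"
      then have "v \<in> nb T v'" using nbP[OF that vv(2)] vv(1) by auto
      then show False using nb_notin[OF that vv(1)] vv(3) by simp
    qed
  qed
  have face_eq: "T \<inter> \<Inter> (nb T ` V) = T - V" if "T \<in> F" "V \<subseteq> T" for T V
  proof
    show "T \<inter> \<Inter> (nb T ` V) \<subseteq> T - V"
    proof
      fix x assume x: "x \<in> T \<inter> \<Inter> (nb T ` V)"
      have "x \<notin> V"
      proof
        assume "x \<in> V"
        then have "x \<in> nb T x" using x by auto
        then show False using nb_notin[OF that(1)] \<open>x \<in> V\<close> that(2) by auto
      qed
      then show "x \<in> T - V" using x by auto
    qed
    show "T - V \<subseteq> T \<inter> \<Inter> (nb T ` V)"
      using nbP[OF that(1)] that(2) by blast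
  qed
  have orient: "is_orientation d \<Delta> Or" using good unfolding good_orientation_def by blast
  have or_adj: "fr_adjacent d \<Delta> a b" if "(a, b) \<in> Or" for a b
    using orient that unfolding is_orientation_def by blast
  have or_anti: "(a, b) \<in> Or \<longleftrightarrow> (b, a) \<notin> Or" if "fr_adjacent d \<Delta> a b" for a b
    using orient that unfolding is_orientation_def by blast
  have uniq_sink: "\<exists>!t. is_sink_in Or (facets_containing \<Delta> \<sigma>) t" if "\<sigma> \<in> \<Delta>" "card \<sigma> = d - k" for \<sigma>
    using good that kd unfolding good_orientation_def by blast
  have frame_struct: "t \<in> F \<and> S = nb t ` {v \<in> t. nb t v \<in> S} \<and> card {v \<in> t. nb t v \<in> S} = k
      \<and> frame_face (t, S) = t - {v \<in> t. nb t v \<in> S} \<and> (\<forall>s\<in>S. (s, t) \<in> Or)"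
    if "(t, S) \<in> in_frames d \<Delta> Or k" for t S
  proof -
    have tS: "t \<in> F" "card S = k" "\<forall>s\<in>S. fr_adjacent d \<Delta> t s" "\<forall>s\<in>S. (s, t) \<in> Or"
      using that unfolding in_frames_def k_frames_def F_def by auto
    define V where "V = {v \<in> t. nb t v \<in> S}"
    have SV: "S = nb t ` V"
    proof
      show "S \<subseteq> nb t ` V"
      proof
        fix s assume "s \<in> S"
        then obtain v where "v \<in> t" "s = nb t v" using adj_nb tS(3) by blast
        then show "s \<in> nb t ` V" unfolding V_def using \<open>s \<in> S\<close> by auto
      qed
      show "nb t ` V \<subseteq> S" unfolding V_def by auto
    qed
    have "inj_on (nb t) V" using nb_inj[OF tS(1)] unfolding V_def by (rule inj_on_subset) auto
    then have "card V = k" using tS(2) SV card_image by metis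
    moreover have "frame_face (t, S) = t - V"
      unfolding frame_face_def using face_eq[OF tS(1), of V] SV unfolding V_def by auto
    ultimately show ?thesis using tS SV unfolding V_def by blast
  qed
  have sink_of: "is_sink_in Or (facets_containing \<Delta> (frame_face (t, S))) t"
    if "(t, S) \<in> in_frames d \<Delta> Or k" for t S
  proof -
    define V where "V = {v \<in> t. nb t v \<in> S}"
    have fs: "t \<in> F" "S = nb t ` V" "frame_face (t, S) = t - V" "\<forall>s\<in>S. (s, t) \<in> Or"
      using frame_struct[OF that] unfolding V_def by auto
    show ?thesis unfolding is_sink_in_def
    proof (intro conjI notI)
      show "t \<in> facets_containing \<Delta> (frame_face (t, S))"
        using fs unfolding facets_containing_def F_def by auto
      assume "\<exists>u\<in>facets_containing \<Delta> (frame_face (t, S)). (t, u) \<in> Or"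
      then obtain u where u: "u \<in> facets_containing \<Delta> (t - V)" "(t, u) \<in> Or" using fs by auto
      have adj: "fr_adjacent d \<Delta> t u" using or_adj[OF u(2)] .
      obtain w where w: "w \<in> t" "u = nb t w" using adj_nb[OF adj] by blast
      have "w \<notin> u" using nb_notin[OF fs(1) w(1)] w by simp
      moreover have "t - V \<subseteq> u" using u(1) unfolding facets_containing_def by auto
      ultimately have "w \<in> V" using w by auto
      then have "u \<in> S" using fs w by auto
      then have "(u, t) \<in> Or" using fs by auto
      then show False using u(2) or_anti[OF adj] by simp
    qed
  qed
  show ?thesis unfolding bij_betw_def
  proof (intro conjI)
    show "inj_on frame_face (in_frames d \<Delta> Or k)"
    proof (rule inj_onI)
      fix F1 F2 assume F1: "F1 \<in> in_frames d \<Delta> Or k" and F2: "F2 \<in> in_frames d \<Delta> Or k"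
        and eq: "frame_face F1 = frame_face F2"
      obtain t S where tS: "F1 = (t, S)" by (cases F1)
      obtain t' S' where tS': "F2 = (t', S')" by (cases F2)
      define V where "V = {v \<in> t. nb t v \<in> S}"
      define V' where "V' = {v \<in> t'. nb t' v \<in> S'}"
      have fs: "t \<in> F" "S = nb t ` V" "card V = k" "frame_face (t, S) = t - V"
        using frame_struct[OF F1[unfolded tS]] unfolding V_def by auto
      have fs': "t' \<in> F" "S' = nb t' ` V'" "card V' = k" "frame_face (t', S') = t' - V'"
        using frame_struct[OF F2[unfolded tS']] unfolding V'_def by auto
      define \<sigma> where "\<sigma> = t - V"
      have \<sigma>: "\<sigma> \<in> \<Delta>" "card \<sigma> = d - k"
      proof -
        show "\<sigma> \<in> \<Delta>" using down[of t \<sigma>] fs F\<Delta> unfolding \<sigma>_def by auto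
        have "card t = d" using fs fc unfolding F_def by auto
        then show "card \<sigma> = d - k" unfolding \<sigma>_def using fs(3) V_def by (simp add: card_Diff_subset)
      qed
      have s1: "is_sink_in Or (facets_containing \<Delta> \<sigma>) t"
        using sink_of[OF F1[unfolded tS]] fs unfolding \<sigma>_def by simp
      have s2: "is_sink_in Or (facets_containing \<Delta> \<sigma>) t'"
        using sink_of[OF F2[unfolded tS']] fs fs' eq tS tS' unfolding \<sigma>_def by simp
      have tt: "t' = t" using uniq_sink[OF \<sigma>] s1 s2 by blast
      have "V = t - \<sigma>" unfolding \<sigma>_def V_def by auto
      moreover have "V' = t - \<sigma>" using fs fs' eq tS tS' tt unfolding \<sigma>_def V'_def by auto
      ultimately show "F1 = F2" using tS tS' fs fs' tt by simp
    qed
    show "frame_face ` in_frames d \<Delta> Or k = {\<sigma> \<in> \<Delta>. card \<sigma> = d - k}"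
    proof
      show "frame_face ` in_frames d \<Delta> Or k \<subseteq> {\<sigma> \<in> \<Delta>. card \<sigma> = d - k}"
      proof
        fix \<sigma> assume "\<sigma> \<in> frame_face ` in_frames d \<Delta> Or k"
        then obtain t S where tS: "(t, S) \<in> in_frames d \<Delta> Or k" "\<sigma> = frame_face (t, S)" by auto
        define V where "V = {v \<in> t. nb t v \<in> S}"
        have fs: "t \<in> F" "card V = k" "\<sigma> = t - V"
          using frame_struct[OF tS(1)] tS(2) unfolding V_def by auto
        have "card t = d" using fs fc unfolding F_def by auto
        then have "card \<sigma> = d - k" using fs V_def by (simp add: card_Diff_subset)
        moreover have "\<sigma> \<in> \<Delta>" using down[of t \<sigma>] fs F\<Delta> by auto
        ultimately show "\<sigma> \<in> {\<sigma> \<in> \<Delta>. card \<sigma> = d - k}" by simp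
      qed
      show "{\<sigma> \<in> \<Delta>. card \<sigma> = d - k} \<subseteq> frame_face ` in_frames d \<Delta> Or k"
      proof
        fix \<sigma> assume "\<sigma> \<in> {\<sigma> \<in> \<Delta>. card \<sigma> = d - k}"
        then have \<sigma>: "\<sigma> \<in> \<Delta>" "card \<sigma> = d - k" by auto
        obtain t where t: "is_sink_in Or (facets_containing \<Delta> \<sigma>) t" using uniq_sink[OF \<sigma>] by blast
        have tF: "t \<in> F" "\<sigma> \<subseteq> t" using t unfolding is_sink_in_def facets_containing_def F_def by auto
        define V where "V = t - \<sigma>"
        define S where "S = nb t ` V"
        have Vt: "V \<subseteq> t" unfolding V_def by auto
        have cardV: "card V = k"
        proof -
          have "card t = d" using tF fc unfolding F_def by auto
          then show ?thesis unfolding V_def using tF \<sigma> kd by (simp add: card_Diff_subset)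
        qed
        have cardS: "card S = k" unfolding S_def
          using card_image[OF inj_on_subset[OF nb_inj[OF tF(1)] Vt]] cardV by simp
        have adjS: "\<forall>s\<in>S. fr_adjacent d \<Delta> t s" unfolding S_def using nb_adj[OF tF(1)] Vt by auto
        have inS: "\<forall>s\<in>S. (s, t) \<in> Or"
        proof
          fix s assume "s \<in> S"
          then obtain v where v: "v \<in> V" "s = nb t v" unfolding S_def by auto
          have "s \<in> facets_containing \<Delta> \<sigma>"
            using nbP[OF tF(1), of v] v Vt tF unfolding facets_containing_def V_def F_def by auto
          then have "(t, s) \<notin> Or" using t unfolding is_sink_in_def by auto
          then show "(s, t) \<in> Or" using or_anti[OF nb_adj[OF tF(1), of v]] v Vt by auto
        qed
        have "(t, S) \<in> in_frames d \<Delta> Or k"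
          unfolding in_frames_def k_frames_def using tF cardS adjS inS unfolding F_def by auto
        moreover have "frame_face (t, S) = \<sigma>"
          unfolding frame_face_def S_def using face_eq[OF tF(1) Vt] tF unfolding V_def by auto
        ultimately show "\<sigma> \<in> frame_face ` in_frames d \<Delta> Or k" by force
      qed
    qed
  qed
qed

end
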